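(* Let a countable group $G$ act on a set $X$, let $\Phi=(\ell,\phi,\mathcal{Z},\Gamma,\mathcal{H})$ be a chart for $G$, let $0<\epsilon<1$, let $A\subseteq\mathbb{Z}^\ell\times\Gamma$ be a centered rectangle, and let $E$ be a $(\Phi,A,\epsilon)$-rectangular equivalence relation on $X$. Let $U$ be an $E$-class meeting $X^{\mathcal{H}}$, let $y\in X^{\mathcal{H}}$, and let $M>0$ with $M\le 2^{22\ell}-8$ be such that $\phi(M\cdot A)\cdot y$ meets $U$. Then there are $v\in\mathrm{dom}(\phi)$, a rectangle $B\subseteq\mathbb{Z}^\ell\times\Gamma$ and $\delta>0$ such that $\phi(v)\cdot y\in X^{\mathcal{H}}$, $U$ is $(\Phi,\delta)$-roughly $B$ at $\phi(v)\cdot y$, $A\sqsubseteq B$, $2\delta\cdot B\sqsubseteq\epsilon\cdot A$, and $2^{22\ell}\cdot B\subseteq\mathrm{dom}(\phi)$. Moreover $U$ is $(\Phi,2\delta)$-roughly $B+v$ at $y$.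
   Context: Rectangles: Let $\Gamma$ be a finite additive abelian group with identity $0_\Gamma$ and $\ell\in\mathbb{N}$. Elements $v$ of $\mathbb{R}^\ell\times\Gamma$ have coordinates $v_1,\dots,v_\ell\in\mathbb{R}$, $v_{\ell+1}\in\Gamma$; $\mathbf{0}$ has first $\ell$ coordinates $0$ and last coordinate $0_\Gamma$. For $\lambda\in\mathbb{R}$, $\lambda\cdot v=(\lambda v_1,\dots,\lambda v_\ell,v_{\ell+1})$. $\mathrm{Rec}(a)=\{b\in\mathbb{Z}^\ell\times\Gamma: -|a_i|\le b_i\le|a_i|,\ 1\le i\le\ell\}$. A rectangle is a set $c+\mathrm{Rec}(a)$ with $c,a\in\mathbb{Z}^\ell\times\Gamma$; it can be written uniquely with $c\in\mathbb{Z}^\ell\times\{0_\Gamma\}$ (center) and $a\in\mathbb{N}^\ell\times\{0_\Gamma\}$ (radius vector $\mathrm{L}(A)$, entries $\mathrm{L}_i(A)$). Centered means center $\mathbf{0}$. $A\sqsubseteq B$ means $\mathrm{L}_i(A)\le\mathrm{L}_i(B)$ for all $i$. For $\lambda>0$, $\lambda\cdot A=c+\mathrm{Rec}(\lambda\cdot\mathrm{L}(A))$ with $c$ the center of $A$. Sums of sets/vectors are elementwise. Charts: a chart for $G$ is $\Phi=(\ell,\phi,\mathcal{Z},\Gamma,\mathcal{H})$ with $\mathcal{H}$ a finite collection of pairwise conjugate subgroups of $G$, $\Gamma$ finite abelian, $\mathcal{Z}$ a centered rectangle with all $\mathrm{L}_i(\mathcal{Z})>0$, $\phi$ an injective map into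 $G$ with $\mathrm{dom}(\phi)$ a centered rectangle containing $3\cdot\mathcal{Z}$, $\phi(\mathbf{0})=1_G$, and for all $r,s\in\mathrm{dom}(\phi)$, $H\in\mathcal{H}$: $\phi(r)H=\phi(s)H\Rightarrow r=s$; $r+s+\mathcal{Z}\subseteq\mathrm{dom}(\phi)\Rightarrow\exists z\in\mathcal{Z}:\phi(r)\phi(s)H=\phi(r+s+z)H$; $r-s+\mathcal{Z}\subseteq\mathrm{dom}(\phi)\Rightarrow\exists z\in\mathcal{Z}:\phi(r)\phi(s)^{-1}H=\phi(r-s+z)H$; $-r+s+\mathcal{Z}\subseteq\mathrm{dom}(\phi)\Rightarrow\exists z\in\mathcal{Z}:\phi(r)^{-1}\phi(s)H=\phi(-r+s+z)H$; $-s+\mathcal{Z}\subseteq\mathrm{dom}(\phi)\Rightarrow\exists z\in\mathcal{Z}:\phi(s)^{-1}H=\phi(-s+z)H$. $\phi(S)\cdot x=\{\phi(s)\cdot x:s\in S\}$. $X^{\mathcal{H}}=\{x\in X:\mathrm{Stab}(x)\in\mathcal{H}\}$. Rough rectangles: for a rectangle $B$ with $2\cdot B\subseteq\mathrm{dom}(\phi)$, $x\in X^{\mathcal{H}}$, $0<\delta<1$, a set $R\subseteq X$ is $(\Phi,\delta)$-roughly $B$ at $x$ if $2\cdot\mathcal{Z}\sqsubseteq\delta\cdot B$ and $\phi((1-\delta)\cdot B)\cdot x\subseteq R\subseteq\phi((1+\delta)\cdot B)\cdot x$. Rectangular: for $A$ centered and $0<\epsilon<1$, an equivalence relation $E$ on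 $X$ is $(\Phi,A,\epsilon)$-rectangular if every $E$-class not meeting $X^{\mathcal{H}}$ is a singleton, and for every $E$-class $U$ meeting $X^{\mathcal{H}}$ there are $\delta>0$, a rectangle $B$ and a point $x\in X^{\mathcal{H}}$ such that $U$ is $(\Phi,\delta)$-roughly $B$ at $x$, with $A\sqsubseteq B$, $2^{22\ell}\cdot B\subseteq\mathrm{dom}(\phi)$, and $2\delta\cdot B\sqsubseteq\epsilon\cdot A$. *)

theory Defs
  imports Complex_Main "HOL-Algebra.Group_Action" "HOL-Library.Countable_Set"
begin

text \<open>Elements of Z^l x Gamma are represented as pairs (f, g) with f :: nat => int and
  g in the finite abelian group Gamma (a type of class finite, ab_group_add).
  Membership in Z^l x Gamma means that f vanishes outside {0..<l}.\<close>

type_synonym 'c vec = "(nat \<Rightarrow> int) \<times> 'c"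

definition zvec :: "nat \<Rightarrow> (nat \<Rightarrow> int) \<Rightarrow> bool" where
  "zvec l f \<longleftrightarrow> (\<forall>i\<ge>l. f i = 0)"

definition vzero :: "'c::ab_group_add vec" where
  "vzero = ((\<lambda>_. 0), 0)"

definition vadd :: "'c::ab_group_add vec \<Rightarrow> 'c vec \<Rightarrow> 'c vec" where
  "vadd v w = ((\<lambda>i. fst v i + fst w i), snd v + snd w)"

definition vneg :: "'c::ab_group_add vec \<Rightarrow> 'c vec" where
  "vneg v = ((\<lambda>i. - fst v i), - snd v)"

definition Rec :: "nat \<Rightarrow> (nat \<Rightarrow> real) \<Rightarrow> 'c::ab_group_add vec set" where
  "Rec l a = {b. zvec l (fst b) \<and> (\<forall>i<l. \<bar>real_of_int (fst b i)\<bar> \<le> \<bar>a i\<bar>)}"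

text \<open>The rectangle with center c (in Z^l x {0}) and radius vector a, i.e. c + Rec(a).
  A rectangle B = c + Rec(L(B)) scaled by lambda > 0 is Rect l c (lambda * L(B)).\<close>
definition Rect :: "nat \<Rightarrow> (nat \<Rightarrow> int) \<Rightarrow> (nat \<Rightarrow> real) \<Rightarrow> 'c::ab_group_add vec set" where
  "Rect l c a = (\<lambda>b. vadd (c, 0) b) ` Rec l a"

definition vshift :: "'c::ab_group_add vec set \<Rightarrow> 'c vec \<Rightarrow> 'c vec set" where
  "vshift S v = (\<lambda>s. vadd v s) ` S"

definition phiset :: "('g \<Rightarrow> 'x \<Rightarrow> 'x) \<Rightarrow> ('c vec \<Rightarrow> 'g) \<Rightarrow> 'c vec set \<Rightarrow> 'x \<Rightarrow> 'x set" where
  "phiset act \<phi> S x = {act (\<phi> s) x | s. s \<in> S}"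

definition XH :: "('g, 'm) monoid_scheme \<Rightarrow> 'x set \<Rightarrow> ('g \<Rightarrow> 'x \<Rightarrow> 'x) \<Rightarrow> 'g set set \<Rightarrow> 'x set" where
  "XH G X act \<H> = {x \<in> X. stabilizer G act x \<in> \<H>}"

text \<open>Chart Phi = (l, phi, Z, Gamma, H): Gamma is the type 'c, Z = Rect l 0 z (centered, radius z),
  dom(phi) = Rect l 0 d (centered, radius d).\<close>
definition chart :: "('g, 'm) monoid_scheme \<Rightarrow> nat \<Rightarrow> ('c::{finite,ab_group_add} vec \<Rightarrow> 'g)
    \<Rightarrow> (nat \<Rightarrow> nat) \<Rightarrow> (nat \<Rightarrow> nat) \<Rightarrow> 'g set set \<Rightarrow> bool" where
  "chart G l \<phi> d z \<H> \<longleftrightarrow>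
    (let D = (Rect l (\<lambda>_. 0) (\<lambda>i. real (d i)) :: 'c vec set);
         Z = (Rect l (\<lambda>_. 0) (\<lambda>i. real (z i)) :: 'c vec set) in
     finite \<H> \<and> (\<forall>H\<in>\<H>. subgroup H G) \<and>
     (\<forall>H1\<in>\<H>. \<forall>H2\<in>\<H>. \<exists>g\<in>carrier G. H2 = (\<lambda>h. g \<otimes>\<^bsub>G\<^esub> h \<otimes>\<^bsub>G\<^esub> inv\<^bsub>G\<^esub> g) ` H1) \<and>
     (\<forall>i<l. z i > 0) \<and>
     Rect l (\<lambda>_. 0) (\<lambda>i. 3 * real (z i)) \<subseteq> D \<and>
     \<phi> ` D \<subseteq> carrier G \<and> inj_on \<phi> D \<and> \<phi> vzero = \<one>\<^bsub>G\<^esub> \<and>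
     (\<forall>r\<in>D. \<forall>s\<in>D. \<forall>H\<in>\<H>.
        (\<phi> r <#\<^bsub>G\<^esub> H = \<phi> s <#\<^bsub>G\<^esub> H \<longrightarrow> r = s) \<and>
        (vshift Z (vadd r s) \<subseteq> D \<longrightarrow>
           (\<exists>zz\<in>Z. (\<phi> r \<otimes>\<^bsub>G\<^esub> \<phi> s) <#\<^bsub>G\<^esub> H = \<phi> (vadd (vadd r s) zz) <#\<^bsub>G\<^esub> H)) \<and>
        (vshift Z (vadd r (vneg s)) \<subseteq> D \<longrightarrow>
           (\<exists>zz\<in>Z. (\<phi> r \<otimes>\<^bsub>G\<^esub> inv\<^bsub>G\<^esub> \<phi> s) <#\<^bsub>G\<^esub> H
                     = \<phi> (vadd (vadd r (vneg s)) zz) <#\<^bsub>G\<^esub> H)) \<and>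
        (vshift Z (vadd (vneg r) s) \<subseteq> D \<longrightarrow>
           (\<exists>zz\<in>Z. (inv\<^bsub>G\<^esub> \<phi> r \<otimes>\<^bsub>G\<^esub> \<phi> s) <#\<^bsub>G\<^esub> H
                     = \<phi> (vadd (vadd (vneg r) s) zz) <#\<^bsub>G\<^esub> H)) \<and>
        (vshift Z (vneg s) \<subseteq> D \<longrightarrow>
           (\<exists>zz\<in>Z. (inv\<^bsub>G\<^esub> \<phi> s) <#\<^bsub>G\<^esub> H = \<phi> (vadd (vneg s) zz) <#\<^bsub>G\<^esub> H))))"

text \<open>R is (Phi,delta)-roughly B at x, where B = Rect l c (real o r) (center c, radius vector r).
  The standing requirements of the definition (2B within dom(phi), x in X^H, 0 < delta < 1)
  are included.\<close>
definition roughly :: "('g, 'm) monoid_scheme \<Rightarrow> 'x set \<Rightarrow> ('g \<Rightarrow> 'x \<Rightarrow> 'x) \<Rightarrow> nat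
    \<Rightarrow> ('c::{finite,ab_group_add} vec \<Rightarrow> 'g) \<Rightarrow> (nat \<Rightarrow> nat) \<Rightarrow> (nat \<Rightarrow> nat) \<Rightarrow> 'g set set
    \<Rightarrow> real \<Rightarrow> (nat \<Rightarrow> int) \<Rightarrow> (nat \<Rightarrow> nat) \<Rightarrow> 'x \<Rightarrow> 'x set \<Rightarrow> bool" where
  "roughly G X act l \<phi> d z \<H> \<delta> c r x R \<longleftrightarrow>
     zvec l c \<and>
     (Rect l c (\<lambda>i. 2 * real (r i)) :: 'c vec set) \<subseteq> Rect l (\<lambda>_. 0) (\<lambda>i. real (d i)) \<and>
     x \<in> XH G X act \<H> \<and> 0 < \<delta> \<and> \<delta> < 1 \<and>
     (\<forall>i<l. 2 * real (z i) \<le> \<delta> * real (r i)) \<and>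
     phiset act \<phi> (Rect l c (\<lambda>i. (1 - \<delta>) * real (r i))) x \<subseteq> R \<and>
     R \<subseteq> phiset act \<phi> (Rect l c (\<lambda>i. (1 + \<delta>) * real (r i))) x"

text \<open>E is (Phi, A, epsilon)-rectangular, A the centered rectangle with radius vector a.\<close>
definition rectangular :: "('g, 'm) monoid_scheme \<Rightarrow> 'x set \<Rightarrow> ('g \<Rightarrow> 'x \<Rightarrow> 'x) \<Rightarrow> nat
    \<Rightarrow> ('c::{finite,ab_group_add} vec \<Rightarrow> 'g) \<Rightarrow> (nat \<Rightarrow> nat) \<Rightarrow> (nat \<Rightarrow> nat) \<Rightarrow> 'g set set
    \<Rightarrow> (nat \<Rightarrow> nat) \<Rightarrow> real \<Rightarrow> ('x \<times> 'x) set \<Rightarrow> bool" where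
  "rectangular G X act l \<phi> d z \<H> a \<epsilon> E \<longleftrightarrow>
     equiv X E \<and>
     (\<forall>U \<in> X // E.
        (U \<inter> XH G X act \<H> = {} \<longrightarrow> (\<exists>u. U = {u})) \<and>
        (U \<inter> XH G X act \<H> \<noteq> {} \<longrightarrow>
           (\<exists>\<delta>>0. \<exists>c r. \<exists>x \<in> XH G X act \<H>.
              roughly G X act l \<phi> d z \<H> \<delta> c r x U \<and>
              (\<forall>i<l. a i \<le> r i) \<and>
              (Rect l c (\<lambda>i. 2 ^ (22 * l) * real (r i)) :: 'c vec set)
                 \<subseteq> Rect l (\<lambda>_. 0) (\<lambda>i. real (d i)) \<and>
              (\<forall>i<l. 2 * \<delta> * real (r i) \<le> \<epsilon> * real (a i)))))"

end

theory Submission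
  imports Defs
begin

lemma Rect_iff: "w \<in> Rect l c \<rho> \<longleftrightarrow> zvec l (\<lambda>i. fst w i - c i) \<and>
   (\<forall>i<l. \<bar>real_of_int (fst w i) - real_of_int (c i)\<bar> \<le> \<bar>\<rho> i\<bar>)"
proof
  assume "w \<in> Rect l c \<rho>"
  then obtain b where b: "b \<in> Rec l \<rho>" "w = vadd (c,0) b" unfolding Rect_def by auto
  then show "zvec l (\<lambda>i. fst w i - c i) \<and>
   (\<forall>i<l. \<bar>real_of_int (fst w i) - real_of_int (c i)\<bar> \<le> \<bar>\<rho> i\<bar>)"
    by (auto simp: vadd_def Rec_def)
next
  assume h: "zvec l (\<lambda>i. fst w i - c i) \<and>
   (\<forall>i<l. \<bar>real_of_int (fst w i) - real_of_int (c i)\<bar> \<le> \<bar>\<rho> i\<bar>)"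
  let ?b = "((\<lambda>i. fst w i - c i), snd w)"
  have "?b \<in> Rec l \<rho>" using h by (auto simp: Rec_def)
  moreover have "w = vadd (c,0) ?b" by (simp add: vadd_def)
  ultimately show "w \<in> Rect l c \<rho>" unfolding Rect_def by blast
qed

lemma bound_lemma:
  fixes c :: "nat \<Rightarrow> int"
  assumes "zvec l c" "(Rect l c (\<lambda>i. real N * real (r i)) :: 'c::ab_group_add vec set) \<subseteq> Rect l (\<lambda>_. 0) (\<lambda>i. real (d i))"
    and "i < l"
  shows "\<bar>real_of_int (c i)\<bar> + real N * real (r i) \<le> real (d i)"
proof -
  define w :: "'c vec" where "w = ((\<lambda>j. if j < l then (if c j \<ge> 0 then c j + int N * int (r j) else c j - int N * int (r j)) else 0), 0)"
  have "w \<in> Rect l c (\<lambda>i. real N * real (r i))"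
    using assms(1) unfolding Rect_iff w_def zvec_def by auto
  with assms(2) have "w \<in> Rect l (\<lambda>_. 0) (\<lambda>i. real (d i))" by blast
  then have "\<bar>real_of_int (fst w i)\<bar> \<le> real (d i)" using assms(3) unfolding Rect_iff by auto
  then show ?thesis using assms(3) unfolding w_def by (auto split: if_splits)
qed

lemma coset_act:
  assumes "group_action G X act" "x \<in> X" "g \<in> carrier G" "g' \<in> carrier G"
    "g <#\<^bsub>G\<^esub> stabilizer G act x = g' <#\<^bsub>G\<^esub> stabilizer G act x"
  shows "act g x = act g' x"
proof -
  interpret ga: group_action G X act by fact
  interpret grp: group G using ga.group_hom group_hom.axioms(1) by blast
  have "\<one>\<^bsub>G\<^esub> \<in> stabilizer G act x" using ga.stabilizer_one_closed assms by blast
  then have "g' \<in> g' <#\<^bsub>G\<^esub> stabilizer G act x" using assms(4)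
    unfolding l_coset_def by (auto intro!: bexI[where x="\<one>\<^bsub>G\<^esub>"])
  then have "g' \<in> g <#\<^bsub>G\<^esub> stabilizer G act x" using assms(5) by simp
  then obtain h where h: "h \<in> stabilizer G act x" "g' = g \<otimes>\<^bsub>G\<^esub> h" unfolding l_coset_def by auto
  have hc: "h \<in> carrier G" "act h x = x" using h(1) unfolding stabilizer_def by auto
  show ?thesis using h(2) ga.composition_rule[OF assms(2) assms(3) hc(1)] hc(2) by simp
qed

lemma act_inv:
  assumes "group_action G X act" "x \<in> X" "g \<in> carrier G"
  shows "act (inv\<^bsub>G\<^esub> g) (act g x) = x"
proof -
  interpret ga: group_action G X act by fact
  interpret grp: group G using ga.group_hom group_hom.axioms(1) by blast
  have "act (inv\<^bsub>G\<^esub> g) (act g x) = act (inv\<^bsub>G\<^esub> g \<otimes>\<^bsub>G\<^esub> g) x"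
    using ga.composition_rule[OF assms(2), of "inv\<^bsub>G\<^esub> g" g] assms(3) by simp
  also have "\<dots> = act \<one>\<^bsub>G\<^esub> x" using assms(3) by simp
  also have "\<dots> = x" using ga.id_eq_one assms(2) by (metis restrict_apply')
  finally show ?thesis .
qed

lemma act_inv2:
  assumes "group_action G X act" "x \<in> X" "g \<in> carrier G"
  shows "act g (act (inv\<^bsub>G\<^esub> g) x) = x"
proof -
  interpret ga: group_action G X act by fact
  interpret grp: group G using ga.group_hom group_hom.axioms(1) by blast
  show ?thesis using act_inv[OF assms(1,2), of "inv\<^bsub>G\<^esub> g"] assms(3) by simp
qed


theorem lemma5p4:
  fixes G :: "('g, 'm) monoid_scheme" and X :: "'x set" and act :: "'g \<Rightarrow> 'x \<Rightarrow> 'x"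
    and l :: nat and \<phi> :: "'c::{finite,ab_group_add} vec \<Rightarrow> 'g"
    and d z :: "nat \<Rightarrow> nat" and \<H> :: "'g set set"
    and a :: "nat \<Rightarrow> nat" and \<epsilon> :: real and E :: "('x \<times> 'x) set"
    and U :: "'x set" and y :: 'x and M :: real
  assumes "group_action G X act"
    and "countable (carrier G)"
    and "chart G l \<phi> d z \<H>"
    and "0 < \<epsilon>" and "\<epsilon> < 1"
    and "rectangular G X act l \<phi> d z \<H> a \<epsilon> E"
    and "U \<in> X // E" and "U \<inter> XH G X act \<H> \<noteq> {}"
    and "y \<in> XH G X act \<H>"
    and "0 < M" and "M \<le> 2 ^ (22 * l) - 8"
    and "phiset act \<phi> (Rect l (\<lambda>_. 0) (\<lambda>i. M * real (a i))) y \<inter> U \<noteq> {}"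
  shows "\<exists>v \<in> (Rect l (\<lambda>_. 0) (\<lambda>i. real (d i)) :: 'c vec set). \<exists>c r. \<exists>\<delta>>0.
           zvec l c \<and>
           act (\<phi> v) y \<in> XH G X act \<H> \<and>
           roughly G X act l \<phi> d z \<H> \<delta> c r (act (\<phi> v) y) U \<and>
           (\<forall>i<l. a i \<le> r i) \<and>
           (\<forall>i<l. 2 * \<delta> * real (r i) \<le> \<epsilon> * real (a i)) \<and>
           (Rect l c (\<lambda>i. 2 ^ (22 * l) * real (r i)) :: 'c vec set)
              \<subseteq> Rect l (\<lambda>_. 0) (\<lambda>i. real (d i)) \<and>
           roughly G X act l \<phi> d z \<H> (2 * \<delta>) (\<lambda>i. c i + fst v i) r y U"
proof -
  let ?D = "Rect l (\<lambda>_. 0) (\<lambda>i. real (d i)) :: 'c vec set"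
  let ?Z = "Rect l (\<lambda>_. 0) (\<lambda>i. real (z i)) :: 'c vec set"
  interpret ga: group_action G X act by fact
  interpret grp: group G using ga.group_hom group_hom.axioms(1) by blast
  have ch: "\<phi> ` ?D \<subseteq> carrier G" "\<forall>i<l. z i > 0"
    "\<forall>r\<in>?D. \<forall>s\<in>?D. \<forall>H\<in>\<H>.
        (vshift ?Z (vadd r s) \<subseteq> ?D \<longrightarrow>
           (\<exists>zz\<in>?Z. (\<phi> r \<otimes>\<^bsub>G\<^esub> \<phi> s) <#\<^bsub>G\<^esub> H = \<phi> (vadd (vadd r s) zz) <#\<^bsub>G\<^esub> H)) \<and>
        (vshift ?Z (vadd r (vneg s)) \<subseteq> ?D \<longrightarrow>
           (\<exists>zz\<in>?Z. (\<phi> r \<otimes>\<^bsub>G\<^esub> inv\<^bsub>G\<^esub> \<phi> s) <#\<^bsub>G\<^esub> H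
                     = \<phi> (vadd (vadd r (vneg s)) zz) <#\<^bsub>G\<^esub> H)) \<and>
        (vshift ?Z (vadd (vneg r) s) \<subseteq> ?D \<longrightarrow>
           (\<exists>zz\<in>?Z. (inv\<^bsub>G\<^esub> \<phi> r \<otimes>\<^bsub>G\<^esub> \<phi> s) <#\<^bsub>G\<^esub> H
                     = \<phi> (vadd (vadd (vneg r) s) zz) <#\<^bsub>G\<^esub> H))"
    using assms(3) unfolding chart_def Let_def by blast+
  have yX: "y \<in> X" and Hy: "stabilizer G act y \<in> \<H>" using assms(9) unfolding XH_def by auto
  have "U \<inter> XH G X act \<H> \<noteq> {} \<longrightarrow>
           (\<exists>\<delta>>0. \<exists>c r. \<exists>x \<in> XH G X act \<H>.
              roughly G X act l \<phi> d z \<H> \<delta> c r x U \<and>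
              (\<forall>i<l. a i \<le> r i) \<and>
              (Rect l c (\<lambda>i. 2 ^ (22 * l) * real (r i)) :: 'c vec set) \<subseteq> ?D \<and>
              (\<forall>i<l. 2 * \<delta> * real (r i) \<le> \<epsilon> * real (a i)))"
    using assms(6,7) unfolding rectangular_def by blast
  then obtain \<delta> c r x where dpos: "\<delta> > 0" and xXH: "x \<in> XH G X act \<H>"
    and rough: "roughly G X act l \<phi> d z \<H> \<delta> c r x U"
    and ar: "\<forall>i<l. a i \<le> r i"
    and big: "(Rect l c (\<lambda>i. 2 ^ (22 * l) * real (r i)) :: 'c vec set) \<subseteq> ?D"
    and eps: "\<forall>i<l. 2 * \<delta> * real (r i) \<le> \<epsilon> * real (a i)"
    using assms(8) by blast
  have xX: "x \<in> X" and Hx: "stabilizer G act x \<in> \<H>" using xXH unfolding XH_def by auto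
  have zc: "zvec l c" and twoR: "(Rect l c (\<lambda>i. 2 * real (r i)) :: 'c vec set) \<subseteq> ?D"
    and d1: "\<delta> < 1" and zr: "\<forall>i<l. 2 * real (z i) \<le> \<delta> * real (r i)"
    and low: "phiset act \<phi> (Rect l c (\<lambda>i. (1 - \<delta>) * real (r i))) x \<subseteq> U"
    and up: "U \<subseteq> phiset act \<phi> (Rect l c (\<lambda>i. (1 + \<delta>) * real (r i))) x"
    using rough unfolding roughly_def by auto
  obtain s where s: "s \<in> (Rect l (\<lambda>_. 0) (\<lambda>i. M * real (a i)) :: 'c vec set)" "act (\<phi> s) y \<in> U"
    using assms(12) unfolding phiset_def by auto
  then obtain t where t: "t \<in> (Rect l c (\<lambda>i. (1 + \<delta>) * real (r i)) :: 'c vec set)"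
    "act (\<phi> s) y = act (\<phi> t) x"
    using up unfolding phiset_def by auto
  have lpos: "l > 0"
  proof (rule ccontr)
    assume "\<not> l > 0" then have "l = 0" by simp
    then show False using assms(10,11) by simp
  qed
  have dhalf: "\<delta> < 1/2"
  proof -
    have "0 < real (z 0)" using ch(2) lpos by simp
    moreover have "2 * real (z 0) \<le> \<delta> * real (r 0)" using zr lpos by blast
    ultimately have "0 < \<delta> * real (r 0)" by linarith
    then have r0: "0 < real (r 0)" using dpos by (simp add: zero_less_mult_iff)
    have "\<epsilon> * real (a 0) \<le> \<epsilon> * real (r 0)" using ar lpos assms(4)
      by (simp add: mult_left_mono)
    also have "\<dots> < real (r 0)" using assms(5) r0 by simp
    finally have "2 * \<delta> * real (r 0) < 1 * real (r 0)" using eps lpos by force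
    then have "2 * \<delta> < 1" using r0 mult_less_cancel_right_pos by blast
    then show ?thesis by simp
  qed
  define N :: nat where "N = 2 ^ (22 * l)"
  have NR: "(2::real) ^ (22 * l) = real N" unfolding N_def by simp
  have MN: "M \<le> real N - 8" using assms(11) NR by simp
  have bnd: "\<And>i. i < l \<Longrightarrow> \<bar>real_of_int (c i)\<bar> + real N * real (r i) \<le> real (d i)"
    using bound_lemma[OF zc, of N r d] big NR by simp
  have cf: "\<And>i. i < l \<Longrightarrow> 2 * real (z i) \<le> \<delta> * real (r i) \<and> \<delta> * real (r i) \<ge> 0
      \<and> M * real (a i) \<le> M * real (r i) \<and> M * real (r i) \<le> real N * real (r i) - 8 * real (r i)
      \<and> M * real (a i) \<ge> 0 \<and> 2 * (\<delta> * real (r i)) \<le> real (r i) \<and> 0 \<le> M * real (r i)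
      \<and> 0 \<le> real (r i)"
  proof -
    fix i assume i: "i < l"
    have "M * real (r i) \<le> (real N - 8) * real (r i)" using MN by (simp add: mult_right_mono)
    have "\<delta> * real (r i) \<le> (1/2) * real (r i)" using dhalf by (intro mult_right_mono) auto
    then have h2: "2 * (\<delta> * real (r i)) \<le> real (r i)" by simp
    have h3: "M * real (a i) \<le> M * real (r i)" using ar i assms(10) by (simp add: mult_left_mono)
    have h4: "0 \<le> M * real (a i)" "0 \<le> M * real (r i)" "\<delta> * real (r i) \<ge> 0" using assms(10) dpos by auto
    have h5: "M * real (r i) \<le> real N * real (r i) - 8 * real (r i)"
      using \<open>M * real (r i) \<le> (real N - 8) * real (r i)\<close> by (simp add: left_diff_distrib)
    show "?thesis i" using zr i h2 h3 h4 h5 by simp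
  qed
  have Dmem: "\<And>w. zvec l (fst w) \<Longrightarrow> (\<And>i. i < l \<Longrightarrow> \<bar>real_of_int (fst w i)\<bar> \<le> real (d i)) \<Longrightarrow> w \<in> ?D"
    unfolding Rect_iff by auto
  have Zmem: "\<And>w. w \<in> ?Z \<Longrightarrow> zvec l (fst w) \<and> (\<forall>i<l. \<bar>real_of_int (fst w i)\<bar> \<le> real (z i))"
    unfolding Rect_iff by auto
  have sc: "zvec l (fst s)" "\<And>i. i < l \<Longrightarrow> \<bar>real_of_int (fst s i)\<bar> \<le> M * real (a i)"
    using s(1) cf assms(10) unfolding Rect_iff by auto
  have tc: "zvec l (\<lambda>i. fst t i - c i)" "\<And>i. i < l \<Longrightarrow> \<bar>real_of_int (fst t i) - real_of_int (c i)\<bar> \<le> real (r i) + \<delta> * real (r i)"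
    using t(1) dpos unfolding Rect_iff by (auto simp: distrib_right)
  have tz: "zvec l (fst t)" using tc(1) zc unfolding zvec_def by auto

  have fv: "\<And>p q i. fst (vadd p q) i = fst p i + fst q i" "\<And>p i. fst (vneg p) i = - fst p i"
    by (auto simp: vadd_def vneg_def)
  have zv: "\<And>p q. zvec l (fst p) \<Longrightarrow> zvec l (fst q) \<Longrightarrow> zvec l (fst (vadd p q))"
    "\<And>p. zvec l (fst p) \<Longrightarrow> zvec l (fst (vneg p))"
    by (auto simp: vadd_def vneg_def zvec_def)
  have vshI: "\<And>p S. (\<And>zz. zz \<in> ?Z \<Longrightarrow> vadd p zz \<in> S) \<Longrightarrow> vshift ?Z p \<subseteq> S"
    unfolding vshift_def by auto
  have zzin: "\<And>p zz. zz \<in> ?Z \<Longrightarrow> vadd p zz \<in> vshift ?Z p" unfolding vshift_def by auto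
  have ca: "\<And>i. \<bar>real_of_int (c i)\<bar> \<ge> real_of_int (c i)" "\<And>i. \<bar>real_of_int (c i)\<bar> \<ge> - real_of_int (c i)"
    by auto
  have tD: "t \<in> ?D"
  proof (rule Dmem[OF tz])
    fix i assume i: "i < l"
    show "\<bar>real_of_int (fst t i)\<bar> \<le> real (d i)"
      using abs_le_D1[OF tc(2)[OF i]] abs_le_D2[OF tc(2)[OF i]] bnd[OF i] cf[OF i] ca[of i]
      by (intro abs_leI) (elim conjE; linarith)+
  qed
  have sD: "s \<in> ?D"
  proof (rule Dmem[OF sc(1)])
    fix i assume i: "i < l"
    show "\<bar>real_of_int (fst s i)\<bar> \<le> real (d i)"
      using abs_le_D1[OF sc(2)[OF i]] abs_le_D2[OF sc(2)[OF i]] bnd[OF i] cf[OF i] ca[of i]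
      by (intro abs_leI) (elim conjE; linarith)+
  qed
  have sh1: "vshift ?Z (vadd (vneg t) s) \<subseteq> ?D"
  proof (rule vshI)
    fix zz assume zz: "zz \<in> ?Z"
    show "vadd (vadd (vneg t) s) zz \<in> ?D"
    proof (rule Dmem)
      have "zvec l (fst zz)" using Zmem[OF zz] by blast
      then show "zvec l (fst (vadd (vadd (vneg t) s) zz))" by (simp add: zv tz sc(1))
      fix i assume i: "i < l"
      have z1: "\<bar>real_of_int (fst zz i)\<bar> \<le> real (z i)" using Zmem[OF zz] i by blast
      note F = abs_le_D1[OF z1] abs_le_D2[OF z1] abs_le_D1[OF tc(2)[OF i]] abs_le_D2[OF tc(2)[OF i]]
        abs_le_D1[OF sc(2)[OF i]] abs_le_D2[OF sc(2)[OF i]] bnd[OF i] cf[OF i] ca[of i]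
      show "\<bar>real_of_int (fst (vadd (vadd (vneg t) s) zz) i)\<bar> \<le> real (d i)"
        unfolding fv of_int_add of_int_minus by (intro abs_leI) (use F in linarith)+
    qed
  qed
  obtain zz where zz: "zz \<in> ?Z" and coset1: "(inv\<^bsub>G\<^esub> \<phi> t \<otimes>\<^bsub>G\<^esub> \<phi> s) <#\<^bsub>G\<^esub> stabilizer G act y
                     = \<phi> (vadd (vadd (vneg t) s) zz) <#\<^bsub>G\<^esub> stabilizer G act y"
    using mp[OF ch(3)[rule_format, OF tD sD Hy, THEN conjunct2, THEN conjunct2] sh1] by blast
  define v where "v = vadd (vadd (vneg t) s) zz"
  have vD: "v \<in> ?D" using sh1 zzin[OF zz] unfolding v_def by blast
  have phic: "\<And>w. w \<in> ?D \<Longrightarrow> \<phi> w \<in> carrier G" using ch(1) by blast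
  have "act (inv\<^bsub>G\<^esub> \<phi> t \<otimes>\<^bsub>G\<^esub> \<phi> s) y = act (\<phi> v) y"
    using coset_act[OF assms(1) yX _ _ coset1] phic tD sD vD unfolding v_def by simp
  moreover have "act (inv\<^bsub>G\<^esub> \<phi> t \<otimes>\<^bsub>G\<^esub> \<phi> s) y = x"
    using ga.composition_rule[OF yX, of "inv\<^bsub>G\<^esub> \<phi> t" "\<phi> s"] phic tD sD t(2)
      act_inv[OF assms(1) xX, of "\<phi> t"] by simp
  ultimately have xv: "x = act (\<phi> v) y" by simp
  have vz: "zvec l (fst v)" using vD unfolding Rect_iff by simp
  have vc: "\<And>i. i < l \<Longrightarrow> \<bar>real_of_int (fst v i) + real_of_int (c i)\<bar> \<le> real (r i) + \<delta> * real (r i) + M * real (a i) + real (z i)"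
  proof -
    fix i assume i: "i < l"
    have z1: "\<bar>real_of_int (fst zz i)\<bar> \<le> real (z i)" using Zmem[OF zz] i by blast
    note F = abs_le_D1[OF z1] abs_le_D2[OF z1] abs_le_D1[OF tc(2)[OF i]] abs_le_D2[OF tc(2)[OF i]]
        abs_le_D1[OF sc(2)[OF i]] abs_le_D2[OF sc(2)[OF i]]
    show "?thesis i"
      unfolding v_def fv of_int_add of_int_minus by (intro abs_leI) (use F in linarith)+
  qed

  have RD: "\<And>w c' \<rho> i. w \<in> (Rect l c' \<rho> :: 'c vec set) \<Longrightarrow> i < l \<Longrightarrow> \<bar>real_of_int (fst w i) - real_of_int (c' i)\<bar> \<le> \<bar>\<rho> i\<bar>"
    unfolding Rect_iff by blast
  have RZ: "\<And>w c' \<rho>. w \<in> (Rect l c' \<rho> :: 'c vec set) \<Longrightarrow> zvec l c' \<Longrightarrow> zvec l (fst w)"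
    unfolding Rect_iff zvec_def by auto
  have czv: "zvec l (\<lambda>i. c i + fst v i)" using zc vz by (simp add: zvec_def)
  have d2: "2 * \<delta> < 1" using dhalf by simp
  have e1: "\<And>i. \<bar>(1 - 2 * \<delta>) * real (r i)\<bar> = real (r i) - 2 * (\<delta> * real (r i))"
  proof -
    fix i have "0 \<le> (1 - 2 * \<delta>) * real (r i)" using d2 by simp
    then show "?thesis i" by (simp add: algebra_simps)
  qed
  have e2: "\<And>i. \<bar>(1 + 2 * \<delta>) * real (r i)\<bar> = real (r i) + 2 * (\<delta> * real (r i))"
    using dpos by (simp add: algebra_simps)
  have e3: "\<And>i. \<bar>(1 - \<delta>) * real (r i)\<bar> = real (r i) - \<delta> * real (r i)"
  proof -
    fix i have "0 \<le> (1 - \<delta>) * real (r i)" using d1 by simp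
    then show "?thesis i" by (simp add: algebra_simps)
  qed
  have e4: "\<And>i. \<bar>(1 + \<delta>) * real (r i)\<bar> = real (r i) + \<delta> * real (r i)"
    using dpos by (simp add: algebra_simps)
  have e5: "\<And>i. \<bar>2 * real (r i)\<bar> = 2 * real (r i)" by simp
  have phiv: "\<phi> v \<in> carrier G" using phic vD by blast
  have rough2: "roughly G X act l \<phi> d z \<H> (2 * \<delta>) (\<lambda>i. c i + fst v i) r y U"
    unfolding roughly_def
  proof (intro conjI)
    show "zvec l (\<lambda>i. c i + fst v i)" by fact
    show "y \<in> XH G X act \<H>" by fact
    show "0 < 2 * \<delta>" using dpos by simp
    show "2 * \<delta> < 1" by fact
    show "\<forall>i<l. 2 * real (z i) \<le> 2 * \<delta> * real (r i)"
    proof (intro allI impI)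
      fix i assume i: "i < l"
      then have "2 * real (z i) \<le> \<delta> * real (r i)" "0 \<le> \<delta> * real (r i)" using cf by auto
      then show "2 * real (z i) \<le> 2 * \<delta> * real (r i)" by linarith
    qed
    show "(Rect l (\<lambda>i. c i + fst v i) (\<lambda>i. 2 * real (r i)) :: 'c vec set) \<subseteq> ?D"
    proof
      fix w assume w: "w \<in> (Rect l (\<lambda>i. c i + fst v i) (\<lambda>i. 2 * real (r i)) :: 'c vec set)"
      show "w \<in> ?D"
      proof (rule Dmem)
        show "zvec l (fst w)" using RZ[OF w czv] .
        fix i assume i: "i < l"
        have w1: "\<bar>real_of_int (fst w i) - real_of_int (c i + fst v i)\<bar> \<le> 2 * real (r i)"
          using RD[OF w i] e5 by simp
        note F = abs_le_D1[OF w1] abs_le_D2[OF w1] abs_le_D1[OF vc[OF i]] abs_le_D2[OF vc[OF i]]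
          bnd[OF i] cf[OF i] ca[of i]
        show "\<bar>real_of_int (fst w i)\<bar> \<le> real (d i)"
          using F unfolding of_int_add by (intro abs_leI) (use F in linarith)+
      qed
    qed
    show "phiset act \<phi> (Rect l (\<lambda>i. c i + fst v i) (\<lambda>i. (1 - 2 * \<delta>) * real (r i))) y \<subseteq> U"
    proof
      fix p assume "p \<in> phiset act \<phi> (Rect l (\<lambda>i. c i + fst v i) (\<lambda>i. (1 - 2 * \<delta>) * real (r i))) y"
      then obtain u where u: "u \<in> (Rect l (\<lambda>i. c i + fst v i) (\<lambda>i. (1 - 2 * \<delta>) * real (r i)) :: 'c vec set)"
        and p: "p = act (\<phi> u) y" unfolding phiset_def by blast
      have uz: "zvec l (fst u)" using RZ[OF u czv] .
      have ub: "\<And>i. i < l \<Longrightarrow> \<bar>real_of_int (fst u i) - real_of_int (c i) - real_of_int (fst v i)\<bar> \<le> real (r i) - 2 * (\<delta> * real (r i))"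
      proof -
        fix i assume i: "i < l"
        show "?thesis i" using RD[OF u i] unfolding e1 of_int_add diff_diff_eq .
      qed
      have uD: "u \<in> ?D"
      proof (rule Dmem[OF uz])
        fix i assume i: "i < l"
        note F = abs_le_D1[OF ub[OF i]] abs_le_D2[OF ub[OF i]] abs_le_D1[OF vc[OF i]] abs_le_D2[OF vc[OF i]]
          bnd[OF i] cf[OF i] ca[of i]
        show "\<bar>real_of_int (fst u i)\<bar> \<le> real (d i)"
          by (intro abs_leI) (use F in linarith)+
      qed
      have sh2: "vshift ?Z (vadd u (vneg v)) \<subseteq> ?D"
      proof (rule vshI)
        fix zz assume zz: "zz \<in> ?Z"
        show "vadd (vadd u (vneg v)) zz \<in> ?D"
        proof (rule Dmem)
          have "zvec l (fst zz)" using Zmem[OF zz] by blast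
          then show "zvec l (fst (vadd (vadd u (vneg v)) zz))" by (simp add: zv uz vz)
          fix i assume i: "i < l"
          have z1: "\<bar>real_of_int (fst zz i)\<bar> \<le> real (z i)" using Zmem[OF zz] i by blast
          note F = abs_le_D1[OF z1] abs_le_D2[OF z1] abs_le_D1[OF ub[OF i]] abs_le_D2[OF ub[OF i]]
            bnd[OF i] cf[OF i] ca[of i]
          show "\<bar>real_of_int (fst (vadd (vadd u (vneg v)) zz) i)\<bar> \<le> real (d i)"
            unfolding fv of_int_add of_int_minus by (intro abs_leI) (use F in linarith)+
        qed
      qed
      obtain zz where zz: "zz \<in> ?Z" and cos: "(\<phi> u \<otimes>\<^bsub>G\<^esub> inv\<^bsub>G\<^esub> \<phi> v) <#\<^bsub>G\<^esub> stabilizer G act x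
                     = \<phi> (vadd (vadd u (vneg v)) zz) <#\<^bsub>G\<^esub> stabilizer G act x"
        using mp[OF ch(3)[rule_format, OF uD vD Hx, THEN conjunct2, THEN conjunct1] sh2] by blast
      define w where "w = vadd (vadd u (vneg v)) zz"
      have wD: "w \<in> ?D" using sh2 zzin[OF zz] unfolding w_def by blast
      have "act (\<phi> u \<otimes>\<^bsub>G\<^esub> inv\<^bsub>G\<^esub> \<phi> v) x = act (\<phi> w) x"
        using coset_act[OF assms(1) xX _ _ cos] phic uD wD phiv unfolding w_def by simp
      moreover have "act (\<phi> u \<otimes>\<^bsub>G\<^esub> inv\<^bsub>G\<^esub> \<phi> v) x = act (\<phi> u) y"
        using ga.composition_rule[OF xX, of "\<phi> u" "inv\<^bsub>G\<^esub> \<phi> v"] phic uD phiv xv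
          act_inv[OF assms(1) yX phiv] by simp
      ultimately have pw: "p = act (\<phi> w) x" using p by simp
      have "w \<in> (Rect l c (\<lambda>i. (1 - \<delta>) * real (r i)) :: 'c vec set)"
        unfolding Rect_iff
      proof (intro conjI allI impI)
        have "zvec l (fst zz)" using Zmem[OF zz] by blast
        then have "zvec l (fst w)" unfolding w_def by (simp add: zv uz vz)
        then show "zvec l (\<lambda>i. fst w i - c i)" using zc by (simp add: zvec_def)
        fix i assume i: "i < l"
        have z1: "\<bar>real_of_int (fst zz i)\<bar> \<le> real (z i)" using Zmem[OF zz] i by blast
        note F = abs_le_D1[OF z1] abs_le_D2[OF z1] abs_le_D1[OF ub[OF i]] abs_le_D2[OF ub[OF i]]
          cf[OF i]
        show "\<bar>real_of_int (fst w i) - real_of_int (c i)\<bar> \<le> \<bar>(1 - \<delta>) * real (r i)\<bar>"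
          unfolding e3 w_def fv of_int_add of_int_minus by (intro abs_leI) (use F in linarith)+
      qed
      then show "p \<in> U" using low pw unfolding phiset_def by blast
    qed
    show "U \<subseteq> phiset act \<phi> (Rect l (\<lambda>i. c i + fst v i) (\<lambda>i. (1 + 2 * \<delta>) * real (r i))) y"
    proof
      fix q assume "q \<in> U"
      then obtain t' where t': "t' \<in> (Rect l c (\<lambda>i. (1 + \<delta>) * real (r i)) :: 'c vec set)"
        and q: "q = act (\<phi> t') x" using up unfolding phiset_def by blast
      have t'z: "zvec l (fst t')" using RZ[OF t' zc] .
      have t'b: "\<And>i. i < l \<Longrightarrow> \<bar>real_of_int (fst t' i) - real_of_int (c i)\<bar> \<le> real (r i) + \<delta> * real (r i)"
      proof -
        fix i assume i: "i < l"
        show "?thesis i" using RD[OF t' i] unfolding e4 .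
      qed
      have t'D: "t' \<in> ?D"
      proof (rule Dmem[OF t'z])
        fix i assume i: "i < l"
        note F = abs_le_D1[OF t'b[OF i]] abs_le_D2[OF t'b[OF i]] bnd[OF i] cf[OF i] ca[of i]
        show "\<bar>real_of_int (fst t' i)\<bar> \<le> real (d i)"
          by (intro abs_leI) (use F in linarith)+
      qed
      have sh3: "vshift ?Z (vadd t' v) \<subseteq> ?D"
      proof (rule vshI)
        fix zz assume zz: "zz \<in> ?Z"
        show "vadd (vadd t' v) zz \<in> ?D"
        proof (rule Dmem)
          have "zvec l (fst zz)" using Zmem[OF zz] by blast
          then show "zvec l (fst (vadd (vadd t' v) zz))" by (simp add: zv t'z vz)
          fix i assume i: "i < l"
          have z1: "\<bar>real_of_int (fst zz i)\<bar> \<le> real (z i)" using Zmem[OF zz] i by blast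
          note F = abs_le_D1[OF z1] abs_le_D2[OF z1] abs_le_D1[OF t'b[OF i]] abs_le_D2[OF t'b[OF i]]
            abs_le_D1[OF vc[OF i]] abs_le_D2[OF vc[OF i]] bnd[OF i] cf[OF i] ca[of i]
          show "\<bar>real_of_int (fst (vadd (vadd t' v) zz) i)\<bar> \<le> real (d i)"
            unfolding fv of_int_add of_int_minus by (intro abs_leI) (use F in linarith)+
        qed
      qed
      obtain zz where zz: "zz \<in> ?Z" and cos: "(\<phi> t' \<otimes>\<^bsub>G\<^esub> \<phi> v) <#\<^bsub>G\<^esub> stabilizer G act y
                     = \<phi> (vadd (vadd t' v) zz) <#\<^bsub>G\<^esub> stabilizer G act y"
        using mp[OF ch(3)[rule_format, OF t'D vD Hy, THEN conjunct1] sh3] by blast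
      define w where "w = vadd (vadd t' v) zz"
      have wD: "w \<in> ?D" using sh3 zzin[OF zz] unfolding w_def by blast
      have "act (\<phi> t' \<otimes>\<^bsub>G\<^esub> \<phi> v) y = act (\<phi> w) y"
        using coset_act[OF assms(1) yX _ _ cos] phic t'D wD phiv unfolding w_def by simp
      moreover have "act (\<phi> t' \<otimes>\<^bsub>G\<^esub> \<phi> v) y = q"
        using ga.composition_rule[OF yX, of "\<phi> t'" "\<phi> v"] phic t'D phiv xv q by simp
      ultimately have qw: "q = act (\<phi> w) y" by simp
      have "w \<in> (Rect l (\<lambda>i. c i + fst v i) (\<lambda>i. (1 + 2 * \<delta>) * real (r i)) :: 'c vec set)"
        unfolding Rect_iff
      proof (intro conjI allI impI)
        have "zvec l (fst zz)" using Zmem[OF zz] by blast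
        then have "zvec l (fst w)" unfolding w_def by (simp add: zv t'z vz)
        then show "zvec l (\<lambda>i. fst w i - (c i + fst v i))" using czv by (simp add: zvec_def)
        fix i assume i: "i < l"
        have z1: "\<bar>real_of_int (fst zz i)\<bar> \<le> real (z i)" using Zmem[OF zz] i by blast
        note F = abs_le_D1[OF z1] abs_le_D2[OF z1] abs_le_D1[OF t'b[OF i]] abs_le_D2[OF t'b[OF i]]
          cf[OF i]
        show "\<bar>real_of_int (fst w i) - real_of_int (c i + fst v i)\<bar> \<le> \<bar>(1 + 2 * \<delta>) * real (r i)\<bar>"
          unfolding e2 w_def fv of_int_add of_int_minus by (intro abs_leI) (use F in linarith)+
      qed
      then show "q \<in> phiset act \<phi> (Rect l (\<lambda>i. c i + fst v i) (\<lambda>i. (1 + 2 * \<delta>) * real (r i))) y"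
        using qw unfolding phiset_def by blast
    qed
  qed
  have rough1: "roughly G X act l \<phi> d z \<H> \<delta> c r (act (\<phi> v) y) U" using rough xv by simp
  have xv2: "act (\<phi> v) y \<in> XH G X act \<H>" using xXH xv by simp
  show ?thesis
    apply (rule bexI[OF _ vD])
    apply (rule exI[of _ c], rule exI[of _ r], rule exI[of _ \<delta>])
    using dpos zc xv2 rough1 ar eps big rough2 by blast
qed

end
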